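(* Consider the randomized gossip model described in the context. If disagreement divergence is achieved almost surely (for some initial value), then $\prod_{k=0}^\infty (1+2S_k)=\infty$.
   Context: Network with node set $\mathcal V=\{1,\dots,n\}$, $n\ge 3$. Let $A=[a_{ij}]$ be an $n\times n$ stochastic matrix. At each time $k=0,1,2,\dots$, independently of the past and of node states, a node $i$ is drawn with probability $1/n$ and then the pair $(i,j)$ is selected with probability $a_{ij}$. Given that pair $(i,j)$ is selected at time $k$, independently of time, node states and pair selection, node $i$: with probability $\alpha$ (event $\mathscr A_{ij}(k)$) sets $x_i(k+1)=(1-T_k)x_i(k)+T_kx_j(k)$, $0<T_k\le1$; with probability $\beta$ (event $\mathscr N_{ij}(k)$) sets $x_i(k+1)=x_i(k)$; with probability $\gamma$ (event $\mathscr R_{ij}(k)$) sets $x_i(k+1)=(1+S_k)x_i(k)-S_kx_j(k)$, $S_k>0$; $\alpha+\beta+\gamma=1$. Node $j$ updates analogously according to events $\mathscr A_{ji}(k),\mathscr N_{ji}(k),\mathscr R_{ji}(k)$ (possibly dependent on node $i$'s event); other nodes keep their states. Start at time $k_0\ge0$ from $x(k_0)\in\mathbb R^n$. Let $\mathcal H(k)=\max_i x_i(k)-\min_i x_i(k)$. Disagreement divergence is achieved a.s. for an initial value if $\mathbf P(\limsup_{k\to\infty}\mathcal H(k)>M)=1$ for all $M\ge0$. *)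

theory Defs
  imports "HOL-Probability.Probability"
begin

text \<open>Events for an updating node: attraction, neglect, repulsion.\<close>
datatype act = Att | Neu | Rep

definition upd :: "act \<Rightarrow> real \<Rightarrow> real \<Rightarrow> real \<Rightarrow> real \<Rightarrow> real" where
  "upd e T S xi xj = (case e of
      Att \<Rightarrow> (1 - T) * xi + T * xj
    | Neu \<Rightarrow> xi
    | Rep \<Rightarrow> (1 + S) * xi - S * xj)"

definition gstep :: "real \<Rightarrow> real \<Rightarrow> (nat \<times> nat) \<times> (act \<times> act) \<Rightarrow> (nat \<Rightarrow> real) \<Rightarrow> (nat \<Rightarrow> real)" where
  "gstep T S oc x = (case oc of ((i, j), (ei, ej)) \<Rightarrow>
      x(i := upd ei T S (x i) (x j), j := upd ej T S (x j) (x i)))"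

text \<open>State at time k0 + m, started at time k0 from x0, driven by the random outcomes w.\<close>
primrec gossip :: "(nat \<Rightarrow> real) \<Rightarrow> (nat \<Rightarrow> real) \<Rightarrow> nat \<Rightarrow> (nat \<Rightarrow> real)
    \<Rightarrow> (nat \<Rightarrow> (nat \<times> nat) \<times> (act \<times> act)) \<Rightarrow> nat \<Rightarrow> (nat \<Rightarrow> real)" where
  "gossip T S k0 x0 w 0 = x0"
| "gossip T S k0 x0 w (Suc m) = gstep (T (k0 + m)) (S (k0 + m)) (w (k0 + m)) (gossip T S k0 x0 w m)"

definition spread :: "nat \<Rightarrow> (nat \<Rightarrow> real) \<Rightarrow> real" where
  "spread n x = (MAX i\<in>{..<n}. x i) - (MIN i\<in>{..<n}. x i)"

end

theory Submission
  imports Defs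
begin

lemma upd_bound:
  assumes "lo \<le> xi" "xi \<le> hi" "lo \<le> xj" "xj \<le> hi" "0 < T" "T \<le> 1" "0 < S"
  shows "lo - S * (hi - lo) \<le> upd e T S xi xj \<and> upd e T S xi xj \<le> hi + S * (hi - lo)"
proof (cases e)
  case Att
  have "(1 - T) * xi + T * xj \<le> (1 - T) * hi + T * hi"
    using assms by (intro add_mono mult_left_mono) auto
  moreover have "(1 - T) * lo + T * lo \<le> (1 - T) * xi + T * xj"
    using assms by (intro add_mono mult_left_mono) auto
  moreover have "S * (hi - lo) \<ge> 0" using assms by auto
  ultimately show ?thesis using Att by (auto simp: upd_def algebra_simps)
next
  case Neu
  have sD: "S * (hi - lo) \<ge> 0" using assms by auto
  have "upd e T S xi xj = xi" using Neu by (simp add: upd_def)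
  then show ?thesis using sD assms by (intro conjI) linarith+
next
  case Rep
  have "S * (xi - xj) \<le> S * (hi - lo)" "S * (lo - hi) \<le> S * (xi - xj)"
    using assms by (intro mult_left_mono; auto)+
  then show ?thesis using Rep assms by (auto simp: upd_def algebra_simps)
qed

lemma gossip_bound:
  assumes T_pos: "\<And>k. 0 < T k" and T_le1: "\<And>k. T k \<le> 1" and S_pos: "\<And>k. 0 < S k"
    and good: "\<And>k. fst (fst (w k)) < n \<and> snd (fst (w k)) < n"
    and b0: "\<And>i. i < n \<Longrightarrow> lo0 \<le> x0 i \<and> x0 i \<le> hi0" and "lo0 \<le> hi0"
  shows "\<exists>lo hi. (\<forall>i<n. lo \<le> gossip T S k0 x0 w m i \<and> gossip T S k0 x0 w m i \<le> hi)
     \<and> hi - lo \<le> (hi0 - lo0) * (\<Prod>k<m. 1 + 2 * S (k0 + k))"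
proof (induction m)
  case 0
  then show ?case using b0 by auto
next
  case (Suc m)
  then obtain lo hi where B: "\<forall>i<n. lo \<le> gossip T S k0 x0 w m i \<and> gossip T S k0 x0 w m i \<le> hi"
    and D: "hi - lo \<le> (hi0 - lo0) * (\<Prod>k<m. 1 + 2 * S (k0 + k))" by blast
  define s where "s = S (k0 + m)"
  define x where "x = gossip T S k0 x0 w m"
  obtain i j ei ej where wk: "w (k0 + m) = ((i, j), (ei, ej))" by (metis prod.exhaust)
  have ij: "i < n" "j < n" using good[of "k0+m"] wk by auto
  have s0: "0 < s" using S_pos s_def by auto
  have new: "gossip T S k0 x0 w (Suc m) = x(i := upd ei (T (k0+m)) s (x i) (x j), j := upd ej (T (k0+m)) s (x j) (x i))"
    using wk by (simp add: gstep_def x_def s_def)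
  have Bx: "\<And>l. l < n \<Longrightarrow> lo \<le> x l \<and> x l \<le> hi" using B x_def by auto
  have hl: "lo \<le> hi" using Bx[OF ij(1)] by auto
  have sD: "0 \<le> s * (hi - lo)" using s0 hl by auto
  have u1: "lo - s * (hi - lo) \<le> upd ei (T (k0+m)) s (x i) (x j) \<and> upd ei (T (k0+m)) s (x i) (x j) \<le> hi + s * (hi - lo)"
    using Bx[OF ij(1)] Bx[OF ij(2)] by (intro upd_bound) (auto simp: T_pos T_le1 s0)
  have u2: "lo - s * (hi - lo) \<le> upd ej (T (k0+m)) s (x j) (x i) \<and> upd ej (T (k0+m)) s (x j) (x i) \<le> hi + s * (hi - lo)"
    using Bx[OF ij(1)] Bx[OF ij(2)] by (intro upd_bound) (auto simp: T_pos T_le1 s0)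
  have allB: "\<forall>l<n. lo - s * (hi - lo) \<le> gossip T S k0 x0 w (Suc m) l \<and> gossip T S k0 x0 w (Suc m) l \<le> hi + s * (hi - lo)"
    using u1 u2 Bx sD unfolding new by fastforce
  have "(hi + s * (hi - lo)) - (lo - s * (hi - lo)) = (hi - lo) * (1 + 2 * s)" by (simp add: algebra_simps)
  also have "\<dots> \<le> (hi0 - lo0) * (\<Prod>k<m. 1 + 2 * S (k0 + k)) * (1 + 2 * s)"
    using D s0 by (intro mult_right_mono) auto
  also have "\<dots> = (hi0 - lo0) * (\<Prod>k<Suc m. 1 + 2 * S (k0 + k))" by (simp add: s_def)
  finally show ?case using allB by blast
qed

lemma prod_split:
  fixes S :: "nat \<Rightarrow> real" and m :: nat
  shows "(\<Prod>k<p. 1 + 2 * S k) * (\<Prod>k<m. 1 + 2 * S (p + k)) = (\<Prod>k<p + m. 1 + 2 * S k)"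
  by (induction m) (auto simp: algebra_simps)

theorem theorem2:
  fixes n :: nat and a :: "nat \<Rightarrow> nat \<Rightarrow> real"
    and \<alpha> \<beta> \<gamma> :: real
    and T S :: "nat \<Rightarrow> real"
    and sel :: "(nat \<times> nat) pmf" and ev :: "(act \<times> act) pmf"
    and k0 :: nat and x0 :: "nat \<Rightarrow> real"
  assumes n3: "n \<ge> 3"
    and a_nonneg: "\<And>i j. i < n \<Longrightarrow> j < n \<Longrightarrow> a i j \<ge> 0"
    and a_stoch: "\<And>i. i < n \<Longrightarrow> (\<Sum>j<n. a i j) = 1"
    and sel_def: "\<And>i j. pmf sel (i, j) = (if i < n \<and> j < n then a i j / real n else 0)"
    and abc: "\<alpha> \<ge> 0" "\<beta> \<ge> 0" "\<gamma> \<ge> 0" "\<alpha> + \<beta> + \<gamma> = 1"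
    and ev_i: "pmf (map_pmf fst ev) Att = \<alpha>" "pmf (map_pmf fst ev) Neu = \<beta>"
              "pmf (map_pmf fst ev) Rep = \<gamma>"
    and ev_j: "pmf (map_pmf snd ev) Att = \<alpha>" "pmf (map_pmf snd ev) Neu = \<beta>"
              "pmf (map_pmf snd ev) Rep = \<gamma>"
    and T_pos: "\<And>k. 0 < T k" and T_le1: "\<And>k. T k \<le> 1"
    and S_pos: "\<And>k. 0 < S k"
    and diverge: "\<And>M. M \<ge> 0 \<Longrightarrow>
       measure (PiM UNIV (\<lambda>_::nat. measure_pmf (pair_pmf sel ev)))
         {w \<in> space (PiM UNIV (\<lambda>_::nat. measure_pmf (pair_pmf sel ev))).
            limsup (\<lambda>k. ereal (spread n (gossip T S k0 x0 w (k - k0)))) > ereal M} = 1"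
  shows "filterlim (\<lambda>N. \<Prod>k<N. 1 + 2 * S k) at_top sequentially"
proof (rule ccontr)
  define Q where "Q N = (\<Prod>k<N. 1 + 2 * S k)" for N
  assume nf: "\<not> filterlim (\<lambda>N. \<Prod>k<N. 1 + 2 * S k) at_top sequentially"
  have monoQ: "Q N \<le> Q N'" if "N \<le> N'" for N N'
  proof -
    have "Q N \<le> Q N * (\<Prod>k<N'-N. 1 + 2 * S (N + k))"
    proof -
      have "Q N \<ge> 0" unfolding Q_def by (intro prod_nonneg) (metis S_pos add_nonneg_nonneg less_imp_le mult_nonneg_nonneg zero_le_numeral zero_le_one)
      moreover have "(\<Prod>k<N'-N. 1 + 2 * S (N + k)) \<ge> 1"
        using S_pos by (intro prod_ge_1) (auto intro: less_imp_le)
      ultimately show ?thesis by (metis mult_left_mono mult.right_neutral)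
    qed
    also have "\<dots> = Q N'" unfolding Q_def using prod_split[where p=N and S=S and m="N'-N"] that by simp
    finally show ?thesis .
  qed
  have "\<exists>B. \<forall>N. Q N \<le> B"
  proof (rule ccontr)
    assume "\<not> (\<exists>B. \<forall>N. Q N \<le> B)"
    then have "\<forall>Z. eventually (\<lambda>N. Z \<le> Q N) sequentially"
      by (metis eventually_sequentiallyI linorder_not_le monoQ order.trans order_less_imp_le)
    then have "filterlim Q at_top sequentially" by (simp add: filterlim_at_top)
    then show False using nf unfolding Q_def by simp
  qed
  then obtain B where QB: "\<And>N. Q N \<le> B" by blast
  have Q1: "Q k0 \<ge> 1" unfolding Q_def using S_pos by (intro prod_ge_1) (auto intro: less_imp_le)
  have PB: "(\<Prod>k<m. 1 + 2 * S (k0 + k)) \<le> B" for m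
  proof -
    have P1: "(\<Prod>k<m. 1 + 2 * S (k0 + k)) \<ge> 1"
      using S_pos by (intro prod_ge_1) (auto intro: less_imp_le)
    have "(\<Prod>k<m. 1 + 2 * S (k0 + k)) \<le> Q k0 * (\<Prod>k<m. 1 + 2 * S (k0 + k))"
      using Q1 P1 by (metis mult_right_mono mult_1 order_trans zero_le_one)
    also have "\<dots> = Q (k0 + m)" unfolding Q_def by (rule prod_split)
    finally show ?thesis using QB[of "k0+m"] by simp
  qed
  define lo0 where "lo0 = (MIN i\<in>{..<n}. x0 i)"
  define hi0 where "hi0 = (MAX i\<in>{..<n}. x0 i)"
  have ne: "{..<n} \<noteq> {}" using n3 by (metis lessThan_empty_iff not_numeral_le_zero le_zero_eq)
  have b0: "\<And>i. i < n \<Longrightarrow> lo0 \<le> x0 i \<and> x0 i \<le> hi0" unfolding lo0_def hi0_def by auto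
  have lh0: "lo0 \<le> hi0" using b0[of 0] n3 by auto
  define M where "M = (hi0 - lo0) * B"
  have B1: "B \<ge> 1" using PB[of 0] by simp
  have M0: "M \<ge> 0" unfolding M_def using lh0 B1 by auto
  let ?\<Omega> = "PiM UNIV (\<lambda>_::nat. measure_pmf (pair_pmf sel ev))"
  interpret P: prob_space ?\<Omega> by (intro prob_space_PiM) (auto simp: measure_pmf.prob_space_axioms)
  define E where "E = {w \<in> space ?\<Omega>. limsup (\<lambda>k. ereal (spread n (gossip T S k0 x0 w (k - k0)))) > ereal M}"
  have E1: "measure ?\<Omega> E = 1" using diverge[OF M0] unfolding E_def by simp
  have Ein: "E \<in> sets ?\<Omega>"
  proof (rule ccontr)
    assume "E \<notin> sets ?\<Omega>"
    then have "measure ?\<Omega> E = 0" by (simp add: measure_notin_sets)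
    then show False using E1 by simp
  qed
  have AE_E: "AE w in ?\<Omega>. w \<in> E" using P.prob_eq_1[OF Ein] E1 by simp
  have selset: "x \<in> set_pmf sel \<Longrightarrow> fst x < n \<and> snd x < n" for x
    using sel_def[of "fst x" "snd x"] by (auto simp: set_pmf_eq split: if_splits)
  have AE_good: "AE w in ?\<Omega>. \<forall>k. w k \<in> set_pmf (pair_pmf sel ev)"
    unfolding AE_all_countable
    by (intro allI AE_PiM_component) (auto simp: measure_pmf.prob_space_axioms AE_measure_pmf simp del: set_pair_pmf)
  have "AE w in ?\<Omega>. False"
    using AE_E AE_good
  proof eventually_elim
    case (elim w)
    have good: "\<And>k. fst (fst (w k)) < n \<and> snd (fst (w k)) < n"
    proof -
      fix k
      have "fst (w k) \<in> set_pmf sel" using elim(2) by (auto simp: set_pair_pmf mem_Times_iff)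
      then show "fst (fst (w k)) < n \<and> snd (fst (w k)) < n" by (rule selset)
    qed
    have bnd: "spread n (gossip T S k0 x0 w m) \<le> M" for m
    proof -
      obtain lo hi where L: "\<forall>i<n. lo \<le> gossip T S k0 x0 w m i \<and> gossip T S k0 x0 w m i \<le> hi"
        and D: "hi - lo \<le> (hi0 - lo0) * (\<Prod>k<m. 1 + 2 * S (k0 + k))"
      proof -
        have "\<exists>lo hi. (\<forall>i<n. lo \<le> gossip T S k0 x0 w m i \<and> gossip T S k0 x0 w m i \<le> hi)
            \<and> hi - lo \<le> (hi0 - lo0) * (\<Prod>k<m. 1 + 2 * S (k0 + k))"
          by (rule gossip_bound) (auto simp: T_pos T_le1 S_pos good b0 lh0)
        then show ?thesis using that by blast
      qed
      have "(MAX i\<in>{..<n}. gossip T S k0 x0 w m i) \<le> hi" using L ne by auto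
      moreover have "lo \<le> (MIN i\<in>{..<n}. gossip T S k0 x0 w m i)" using L ne by auto
      moreover have "(hi0 - lo0) * (\<Prod>k<m. 1 + 2 * S (k0 + k)) \<le> M"
        unfolding M_def using lh0 PB by (intro mult_left_mono) auto
      ultimately show ?thesis using D unfolding spread_def by linarith
    qed
    have "limsup (\<lambda>k. ereal (spread n (gossip T S k0 x0 w (k - k0)))) \<le> ereal M"
      by (intro Limsup_bounded always_eventually allI) (simp add: bnd)
    then show False using elim(1) unfolding E_def by auto
  qed
  then show False using P.AE_False by simp
qed

end
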